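(* Let $N\ge1$, $f_1,\dots,f_N,g_1,\dots,g_N\in\mathbb C$ with $S:=\sum_{n=1}^N|f_n||g_n|>0$, and let $P^{\max}>0$, $\sigma^2>0$, $L_0>0$, $d_{\mathrm t},d_{\mathrm r}>0$, $\alpha,\beta>0$. Set $\varrho_g^2=L_0d_{\mathrm t}^{-\alpha}$, $\varrho_f^2=L_0d_{\mathrm r}^{-\beta}$, $\sigma_v^2=\sigma^2$, $P_{\mathrm{BS\text{-}P}}^{\max}=P^{\max}$ and $P_{\mathrm{BS\text{-}A}}^{\max}=P_{\mathrm A}^{\max}=P^{\max}/2$. Define $$\gamma_{\mathrm{passive}}=\frac{P_{\mathrm{BS\text{-}P}}^{\max}S^2}{\sigma^2},\qquad \gamma_{\mathrm{active}}=\frac{P_{\mathrm{BS\text{-}A}}^{\max}P_{\mathrm A}^{\max}S^2}{N\left(P_{\mathrm A}^{\max}\sigma_v^2\varrho_f^2+P_{\mathrm{BS\text{-}A}}^{\max}\sigma^2\varrho_g^2+\sigma^2\sigma_v^2\right)}.$$ If $\gamma_{\mathrm{active}}\ge\gamma_{\mathrm{passive}}$, then $P^{\max}>4N\sigma^2$ and $$\frac{1}{d_{\mathrm t}^{-\alpha}+d_{\mathrm r}^{-\beta}}\ \ge\ \frac{2NP^{\max}L_0}{P^{\max}-4N\sigma^2}.$$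
   Context: Two single-user single-antenna systems aided by an $N$-element RIS; $g_n$ are BS–RIS and $f_n$ RIS–user channel coefficients, with far-field path losses $\varrho_g^2=L_0d_{\mathrm t}^{-\alpha}$ (BS–RIS distance $d_{\mathrm t}$, exponent $\alpha$) and $\varrho_f^2=L_0d_{\mathrm r}^{-\beta}$ (RIS–user distance $d_{\mathrm r}$, exponent $\beta$), $L_0$ the path loss at 1 m, total radiated power $P^{\max}$. $\gamma_{\mathrm{passive}}$ is the maximal SNR with a passive RIS; the exact maximal SNR with an active RIS (equal amplification, RIS noise power $\sigma_v^2$) is $\frac{P_{\mathrm{BS\text{-}A}}^{\max}P_{\mathrm A}^{\max}S^2}{P_{\mathrm A}^{\max}\sigma_v^2\sum_n|f_n|^2+\sigma^2(P_{\mathrm{BS\text{-}A}}^{\max}\sum_n|g_n|^2+N\sigma_v^2)}$, and $\gamma_{\mathrm{active}}$ above is this with $\frac1N\sum_n|f_n|^2$ and $\frac1N\sum_n|g_n|^2$ replaced by $\varrho_f^2$ and $\varrho_g^2$ (large-$N$ approximation). *)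

theory Defs
  imports Complex_Main
begin

definition gamma_passive :: "real \<Rightarrow> real \<Rightarrow> real \<Rightarrow> real" where
  "gamma_passive P_BSP S sigma2 = P_BSP * S^2 / sigma2"

text \<open>Large-N approximation of the maximal SNR with an active RIS.\<close>
definition gamma_active :: "nat \<Rightarrow> real \<Rightarrow> real \<Rightarrow> real \<Rightarrow> real \<Rightarrow> real \<Rightarrow> real \<Rightarrow> real \<Rightarrow> real" where
  "gamma_active N P_BSA P_A S sigma2 sigmav2 rho_f2 rho_g2 =
     P_BSA * P_A * S^2 /
     (real N * (P_A * sigmav2 * rho_f2 + P_BSA * sigma2 * rho_g2 + sigma2 * sigmav2))"

end

theory Submission
  imports Defs
begin

theorem lemma4:
  fixes N :: nat and f g :: "nat \<Rightarrow> complex"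
    and Pmax sigma2 L0 dt dr alpha beta :: real
  assumes "N \<ge> 1"
    and "(\<Sum>n=1..N. cmod (f n) * cmod (g n)) > 0"
    and "Pmax > 0" "sigma2 > 0" "L0 > 0" "dt > 0" "dr > 0" "alpha > 0" "beta > 0"
    and "gamma_active N (Pmax/2) (Pmax/2) (\<Sum>n=1..N. cmod (f n) * cmod (g n)) sigma2 sigma2
           (L0 * dr powr (-beta)) (L0 * dt powr (-alpha))
         \<ge> gamma_passive Pmax (\<Sum>n=1..N. cmod (f n) * cmod (g n)) sigma2"
  shows "Pmax > 4 * real N * sigma2 \<and>
         1 / (dt powr (-alpha) + dr powr (-beta)) \<ge> 2 * real N * Pmax * L0 / (Pmax - 4 * real N * sigma2)"
proof -
  define S where "S = (\<Sum>n=1..N. cmod (f n) * cmod (g n))"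
  define a where "a = dt powr (-alpha)"
  define b where "b = dr powr (-beta)"
  define P where "P = Pmax"
  define s where "s = sigma2"
  define n where "n = real N"
  have S: "S > 0" using assms(2) S_def by simp
  have a: "a > 0" using assms a_def by simp
  have b: "b > 0" using assms b_def by simp
  have P: "P > 0" and s: "s > 0" and L: "L0 > 0" using assms P_def s_def by auto
  have n: "n \<ge> 1" using assms(1) n_def by simp
  define D where "D = n * (P/2 * s * (L0 * b) + P/2 * s * (L0 * a) + s * s)"
  have D: "D > 0" unfolding D_def using n P s L a b by (intro mult_pos_pos add_pos_pos) auto
  have h: "P/2 * (P/2) * S^2 / D \<ge> P * S^2 / s"
    using assms(10) unfolding gamma_active_def gamma_passive_def D_def S_def a_def b_def P_def s_def n_def .
  hence "P/2 * (P/2) * S^2 * s \<ge> P * S^2 * D"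
    using D s by (simp add: divide_simps)
  hence "(P * S^2) * (P/4 * s) \<ge> (P * S^2) * D" by (simp add: algebra_simps)
  hence h2: "P/4 * s \<ge> D" using P S by (simp add: mult_le_cancel_left)
  hence "s * (P/4) \<ge> s * (n * P * L0 * (a+b)/2 + n * s)" unfolding D_def by (simp add: algebra_simps divide_simps)
  hence h3: "P/4 \<ge> n * P * L0 * (a+b)/2 + n * s" using s by (simp add: mult_le_cancel_left)
  have pos: "n * P * L0 * (a+b) > 0" using n P L a b by simp
  have g: "P - 4*n*s \<ge> 2 * n * P * L0 * (a+b)" using h3 by linarith
  have g0: "P - 4*n*s > 0" using g pos by linarith
  have "2 * n * P * L0 / (P - 4*n*s) \<le> 1/(a+b)"
    using g g0 a b by (simp add: divide_simps algebra_simps)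
  thus ?thesis using g0 unfolding a_def b_def P_def s_def n_def by simp
qed

end
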